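(* Let $\Gamma$ be a cycle (a graph whose underlying simple graph is a cycle), possibly with some 2-fold edges. Then $\Gamma$ is the family diagram of at most one family of spherical simplices whose dihedral angles lie in $\{\frac{\pi}{2},\frac{\pi}{3},\frac{2\pi}{3},\frac{\pi}{4},\frac{3\pi}{4}\}$ (families considered up to isometry).
   Context: A spherical simplex in $S^n\subset\mathbb{R}^{n+1}$ is given by unit outer normals $f_1,\dots,f_{n+1}$ to its facets; the hyperplanes $f_i^\perp$ cut $S^n$ into $2^{n+1}$ simplices encoded by $\pm f_1,\dots,\pm f_{n+1}$, called a family. For a simplex whose dihedral angles are of the form $\pi/k$ or $\pi(k-1)/k$, its family diagram is the graph with vertices $v_i$ corresponding to the $f_i$, where $v_i$ and $v_j$ are joined by a $(k-2)$-fold edge if the angle between $f_i,f_j$ is $\pi/k$ or $\pi(k-1)/k$, and are not joined if $f_i\perp f_j$. All simplices of a family have the same family diagram; a graph is the family diagram of a family if it is the family diagram of its simplices. *)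

theory Defs
  imports "HOL-Analysis.Analysis"
begin

definition vec_angle :: "'a::euclidean_space \<Rightarrow> 'a \<Rightarrow> real" where
  "vec_angle u v = arccos ((u \<bullet> v) / (norm u * norm v))"

text \<open>A spherical simplex in the unit sphere of 'a (of dimension DIM('a) = n+1),
  given by its unit outer facet normals f 0, ..., f (n) (indices below DIM('a)).\<close>
definition spherical_simplex :: "(nat \<Rightarrow> 'a::euclidean_space) \<Rightarrow> bool" where
  "spherical_simplex f \<longleftrightarrow>
     (\<forall>i<DIM('a). norm (f i) = 1) \<and> inj_on f {..<DIM('a)} \<and>
     independent (f ` {..<DIM('a)})"

text \<open>All dihedral angles lie in {pi/2, pi/3, 2pi/3, pi/4, 3pi/4}. (This set is closed
  under theta -> pi - theta, so it does not matter whether one uses the angle between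
  the normals or its supplement; it also holds for every simplex of the family.)\<close>
definition allowed_angles :: "(nat \<Rightarrow> 'a::euclidean_space) \<Rightarrow> bool" where
  "allowed_angles f \<longleftrightarrow>
     (\<forall>i<DIM('a). \<forall>j<DIM('a). i \<noteq> j \<longrightarrow>
        vec_angle (f i) (f j) \<in> {pi/2, pi/3, 2*pi/3, pi/4, 3*pi/4})"

definition family_diagram :: "(nat \<Rightarrow> 'a::euclidean_space) \<Rightarrow> (nat \<Rightarrow> nat \<Rightarrow> nat) \<Rightarrow> bool" where
  "family_diagram f \<Gamma> \<longleftrightarrow>
     (\<forall>i<DIM('a). \<forall>j<DIM('a). i \<noteq> j \<longrightarrow>
        (\<exists>k::nat. k \<ge> 2 \<and>
           (vec_angle (f i) (f j) = pi / real k \<or>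
            vec_angle (f i) (f j) = pi * (real k - 1) / real k) \<and>
           \<Gamma> i j = k - 2))"

definition cycle_diagram :: "nat \<Rightarrow> (nat \<Rightarrow> nat \<Rightarrow> nat) \<Rightarrow> bool" where
  "cycle_diagram N \<Gamma> \<longleftrightarrow> N \<ge> 3 \<and>
     (\<forall>i<N. \<forall>j<N. \<Gamma> i j = \<Gamma> j i \<and> \<Gamma> i j \<le> 2) \<and>
     (\<exists>p. bij_betw p {..<N} {..<N} \<and>
        (\<forall>i<N. \<forall>j<N. \<Gamma> i j > 0 \<longleftrightarrow> (p j = Suc (p i) mod N \<or> p i = Suc (p j) mod N)))"

text \<open>The family of simplices determined by f, encoded by the set of vectors +-f i.\<close>
definition family_vectors :: "(nat \<Rightarrow> 'a::euclidean_space) \<Rightarrow> 'a set" where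
  "family_vectors f = {v. \<exists>i<DIM('a). v = f i \<or> v = - f i}"

definition isometric_families :: "(nat \<Rightarrow> 'a::euclidean_space) \<Rightarrow> (nat \<Rightarrow> 'a) \<Rightarrow> bool" where
  "isometric_families f g \<longleftrightarrow>
     (\<exists>Q. orthogonal_transformation Q \<and> Q ` family_vectors f = family_vectors g)"

end

theory Submission
  imports Defs
begin

lemma suc_mod_cases: "m < N \<Longrightarrow> Suc m mod N = (if Suc m = N then 0 else Suc m)"
  by auto

lemma angle_class:
  fixes u v :: "'a::euclidean_space" and G :: nat
  assumes nu: "norm u = 1" and nv: "norm v = 1"
    and al: "vec_angle u v \<in> {pi/2, pi/3, 2*pi/3, pi/4, 3*pi/4}"
    and k: "k \<ge> 2" "vec_angle u v = pi / real k \<or> vec_angle u v = pi * (real k - 1) / real k"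
    "G = k - 2"
  shows "(G = 0 \<and> u \<bullet> v = 0) \<or> (G = 1 \<and> \<bar>u \<bullet> v\<bar> = 1/2) \<or> (G = 2 \<and> \<bar>u \<bullet> v\<bar> = sqrt 2 / 2)"
proof -
  have cs: "\<bar>u \<bullet> v\<bar> \<le> 1" using Cauchy_Schwarz_ineq2[of u v] nu nv by simp
  have a: "vec_angle u v = arccos (u \<bullet> v)" unfolding vec_angle_def using nu nv by simp
  have c: "u \<bullet> v = cos (vec_angle u v)" unfolding a using cs by (simp add: cos_arccos_abs)
  have kr: "real k \<ge> 2" using k(1) by simp
  have pp: "pi > 0" by simp
  from al consider "vec_angle u v = pi/2" | "vec_angle u v = pi/3" | "vec_angle u v = 2*pi/3"
    | "vec_angle u v = pi/4" | "vec_angle u v = 3*pi/4" by blast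
  then show ?thesis
  proof cases
    case 1
    have "real k = 2" using k(2) kr unfolding 1 by (auto simp: field_simps)
    then have "k = 2" by linarith
    then show ?thesis using c 1 k(3) by simp
  next
    case 2
    have "real k = 3" using k(2) kr unfolding 2 by (auto simp: field_simps)
    then have "k = 3" by linarith
    then show ?thesis using c 2 k(3) cos_60 by simp
  next
    case 3
    have "real k = 3" using k(2) kr unfolding 3 by (auto simp: field_simps)
    then have "k = 3" by linarith
    moreover have "cos (2*pi/3) = - 1/2" proof -
      have "2*pi/3 = pi - pi/3" by simp
      then show ?thesis using cos_pi_minus[of "pi/3"] cos_60 by simp
    qed
    ultimately show ?thesis using c 3 k(3) by simp
  next
    case 4
    have "real k = 4" using k(2) kr unfolding 4 by (auto simp: field_simps)
    then have "k = 4" by linarith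
    moreover have "u \<bullet> v = sqrt 2 / 2" using c 4 cos_45 by simp
    moreover have "\<bar>u \<bullet> v\<bar> = sqrt 2 / 2" unfolding calculation(2) by simp
    ultimately show ?thesis using k(3) by simp
  next
    case 5
    have "real k = 4" using k(2) kr unfolding 5 by (auto simp: field_simps)
    then have "k = 4" by linarith
    moreover have "cos (3*pi/4) = - (sqrt 2 / 2)" proof -
      have "3*pi/4 = pi - pi/4" by simp
      then show ?thesis using cos_pi_minus[of "pi/4"] cos_45 by simp
    qed
    ultimately show ?thesis using c 5 k(3) by simp
  qed
qed

lemma cyc_sum:
  fixes a :: "nat \<Rightarrow> nat \<Rightarrow> real"
  assumes N3: "3 \<le> N"
    and z: "\<forall>m<N. \<forall>m'<N. m' \<noteq> m \<and> m' \<noteq> Suc m mod N \<and> m \<noteq> Suc m' mod N \<longrightarrow> a m m' = 0"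
    and sym: "\<forall>m<N. \<forall>m'<N. a m m' = a m' m"
  shows "(\<Sum>m<N. \<Sum>m'<N. a m m') = (\<Sum>m<N. a m m) + 2 * (\<Sum>m<N. a m (Suc m mod N))"
proof -
  have split: "a m m' = (if m' = m then a m m else 0) + (if m' = Suc m mod N then a m (Suc m mod N) else 0)
      + (if m = Suc m' mod N then a m m' else 0)" if "m<N" "m'<N" for m m'
  proof -
    have d1: "Suc m mod N \<noteq> m" using that N3 by (simp add: suc_mod_cases)
    have d2: "Suc m' mod N \<noteq> m'" using that N3 by (simp add: suc_mod_cases)
    have d3: "\<not> (m' = Suc m mod N \<and> m = Suc m' mod N)" using that N3
      by (auto simp: suc_mod_cases split: if_splits)
    show ?thesis using z that d1 d2 d3 by auto
  qed
  have "(\<Sum>m<N. \<Sum>m'<N. a m m') = (\<Sum>m<N. \<Sum>m'<N. (if m' = m then a m m else 0) + (if m' = Suc m mod N then a m (Suc m mod N) else 0)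
      + (if m = Suc m' mod N then a m m' else 0))"
    apply (intro sum.cong refl)
    apply (rule split)
    apply auto
    done
  also have "\<dots> = (\<Sum>m<N. a m m) + (\<Sum>m<N. a m (Suc m mod N)) + (\<Sum>m<N. \<Sum>m'<N. (if m = Suc m' mod N then a m m' else 0))"
    using N3 by (simp add: sum.distrib)
  also have "(\<Sum>m<N. \<Sum>m'<N. (if m = Suc m' mod N then a m m' else 0)) = (\<Sum>m'<N. \<Sum>m<N. (if m = Suc m' mod N then a m m' else 0))"
    by (rule sum.swap)
  also have "\<dots> = (\<Sum>m'<N. a (Suc m' mod N) m')"
    using N3 by simp
  also have "\<dots> = (\<Sum>m<N. a m (Suc m mod N))"
    using sym N3 by (intro sum.cong) auto
  finally show ?thesis by simp
qed

lemma cyc_norm: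
  fixes h :: "nat \<Rightarrow> 'a::euclidean_space" and t :: "nat \<Rightarrow> real"
  assumes N3: "3 \<le> N"
    and z: "\<forall>m<N. \<forall>m'<N. m' \<noteq> m \<and> m' \<noteq> Suc m mod N \<and> m \<noteq> Suc m' mod N \<longrightarrow> h m \<bullet> h m' = 0"
  shows "(\<Sum>m<N. t m *\<^sub>R h m) \<bullet> (\<Sum>m<N. t m *\<^sub>R h m) =
     (\<Sum>m<N. t m * t m * (h m \<bullet> h m)) + 2 * (\<Sum>m<N. t m * t (Suc m mod N) * (h m \<bullet> h (Suc m mod N)))"
proof -
  have "(\<Sum>m<N. t m *\<^sub>R h m) \<bullet> (\<Sum>m<N. t m *\<^sub>R h m) = (\<Sum>m<N. \<Sum>m'<N. t m * t m' * (h m \<bullet> h m'))"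
    apply (simp add: inner_sum_left inner_sum_right sum_distrib_left mult.assoc)
    apply (intro sum.cong refl)
    apply (subst inner_commute)
    apply simp
    done
  also have "\<dots> = (\<Sum>m<N. t m * t m * (h m \<bullet> h m)) + 2 * (\<Sum>m<N. t m * t (Suc m mod N) * (h m \<bullet> h (Suc m mod N)))"
    apply (rule cyc_sum[OF N3])
    using z apply auto[1]
    apply (intro allI impI)
    apply (subst inner_commute)
    apply simp
    done
  finally show ?thesis .
qed

lemma core:
  fixes h :: "nat \<Rightarrow> 'a::euclidean_space"
  assumes N3: "3 \<le> N" and unit: "\<forall>m<N. h m \<bullet> h m = 1"
    and z: "\<forall>m<N. \<forall>m'<N. m' \<noteq> m \<and> m' \<noteq> Suc m mod N \<and> m \<noteq> Suc m' mod N \<longrightarrow> h m \<bullet> h m' = 0"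
    and big: "\<forall>m<N. \<bar>h m \<bullet> h (Suc m mod N)\<bar> \<ge> 1/2"
    and indep: "\<And>t. (\<Sum>m<N. t m *\<^sub>R h m) = 0 \<Longrightarrow> \<forall>m<N. t m = 0"
  shows "(\<Prod>m<N. sgn (h m \<bullet> h (Suc m mod N))) \<noteq> (-1)^N"
proof
  assume P: "(\<Prod>m<N. sgn (h m \<bullet> h (Suc m mod N))) = (-1)^N"
  define c where "c m = h m \<bullet> h (Suc m mod N)" for m
  define t where "t m = (-1)^m * (\<Prod>k<m. sgn (c k))" for m :: nat
  have cnz: "c k \<noteq> 0" if "k < N" for k using big that unfolding c_def by force
  have tsq: "t m * t m = 1" if "m \<le> N" for m
  proof -
    have "(\<Prod>k<m. sgn (c k)) * (\<Prod>k<m. sgn (c k)) = (\<Prod>k<m. sgn (c k) * sgn (c k))"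
      by (rule prod.distrib[symmetric])
    also have "\<dots> = (\<Prod>k<m. (1::real))"
      using cnz that by (intro prod.cong refl) (auto simp: sgn_if)
    finally show ?thesis unfolding t_def
      by (simp add: algebra_simps power_mult_distrib[symmetric] flip: power_add)
  qed
  have tS: "t (Suc m) = - t m * sgn (c m)" for m by (simp add: t_def)
  have tN: "t N = t 0" using P by (simp add: t_def c_def flip: power_add)
  have edge: "t m * t (Suc m mod N) * c m = - \<bar>c m\<bar>" if "m < N" for m
  proof -
    have "t (Suc m mod N) = t (Suc m)" using tN that by (simp add: suc_mod_cases)
    then have "t m * t (Suc m mod N) * c m = - (t m * t m) * (c m * sgn (c m))" by (simp add: tS)
    also have "\<dots> = - \<bar>c m\<bar>" using tsq[of m] that by (simp add: abs_sgn)
    finally show ?thesis .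
  qed
  define x where "x = (\<Sum>m<N. t m *\<^sub>R h m)"
  have "x \<bullet> x = (\<Sum>m<N. t m * t m * (h m \<bullet> h m)) + 2 * (\<Sum>m<N. t m * t (Suc m mod N) * c m)"
    unfolding x_def c_def by (rule cyc_norm[OF N3 z])
  also have "\<dots> = real N - 2 * (\<Sum>m<N. \<bar>c m\<bar>)"
    using tsq unit edge by (simp add: sum_negf)
  also have "\<dots> \<le> 0"
  proof -
    have "(\<Sum>m<N. (1/2::real)) \<le> (\<Sum>m<N. \<bar>c m\<bar>)"
      using big unfolding c_def by (intro sum_mono) auto
    then show ?thesis by simp
  qed
  finally have "x = 0" by (metis inner_ge_zero inner_eq_zero_iff order_antisym)
  then have "t 0 = 0" using indep[of t] N3 unfolding x_def by auto
  then show False by (simp add: t_def)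
qed

lemma ortho_ext:
  fixes f g :: "nat \<Rightarrow> 'a::euclidean_space" and e :: "nat \<Rightarrow> real"
  assumes ind: "independent (f ` {..<DIM('a)})" and inj: "inj_on f {..<DIM('a)}"
    and gram: "\<forall>i<DIM('a). \<forall>j<DIM('a). (e i *\<^sub>R g i) \<bullet> (e j *\<^sub>R g j) = f i \<bullet> f j"
  shows "\<exists>Q. orthogonal_transformation Q \<and> (\<forall>i<DIM('a). Q (f i) = e i *\<^sub>R g i)"
proof -
  let ?B = "f ` {..<DIM('a)}"
  let ?iv = "inv_into {..<DIM('a)} f"
  obtain Q where lin: "linear Q" and QB: "\<forall>x\<in>?B. Q x = e (?iv x) *\<^sub>R g (?iv x)"
    using linear_independent_extend[OF ind, of "\<lambda>x. e (?iv x) *\<^sub>R g (?iv x)"] by blast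
  have Qf: "Q (f i) = e i *\<^sub>R g i" if "i < DIM('a)" for i
    using QB that inv_into_f_f[OF inj] by simp
  have cardB: "card ?B = DIM('a)" using card_image[OF inj] by simp
  have span: "span ?B = UNIV"
    using card_ge_dim_independent[of ?B UNIV] ind cardB by auto
  have base: "Q x \<bullet> Q y = x \<bullet> y" if "x \<in> ?B" "y \<in> ?B" for x y
    using that gram Qf by auto
  have step1: "Q x \<bullet> Q y = x \<bullet> y" if "x \<in> span ?B" "y \<in> ?B" for x y
    using that(1)
  proof (induction rule: span_induct_alt)
    case base
    then show ?case using linear_0[OF lin] by simp
  next
    case (step c x z)
    then show ?case using base[OF _ that(2)] linear_add[OF lin] linear_scale[OF lin]
      by (simp add: inner_add_left)
  qed
  have step2: "Q x \<bullet> Q y = x \<bullet> y" if "x \<in> span ?B" "y \<in> span ?B" for x y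
    using that(2)
  proof (induction rule: span_induct_alt)
    case base
    then show ?case using linear_0[OF lin] by simp
  next
    case (step c y z)
    then show ?case using step1[OF that(1)] linear_add[OF lin] linear_scale[OF lin]
      by (simp add: inner_add_right)
  qed
  have "orthogonal_transformation Q"
    unfolding orthogonal_transformation_def using lin step2 span by auto
  then show ?thesis using Qf by blast
qed

lemma indep_reindex:
  fixes f :: "nat \<Rightarrow> 'a::euclidean_space"
  assumes ind: "independent (f ` {..<N})" and inj: "inj_on f {..<N}"
    and bq: "bij_betw q {..<N} {..<N}" and pq: "\<forall>m<N. p (q m) = m"
    and sum0: "(\<Sum>m<N. t m *\<^sub>R f (q m)) = 0"
  shows "\<forall>m<N. t m = 0"
proof -
  let ?B = "f ` {..<N}"
  define u where "u v = t (p (inv_into {..<N} f v))" for v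
  have "(\<Sum>v\<in>?B. u v *\<^sub>R v) = (\<Sum>i<N. u (f i) *\<^sub>R f i)"
    by (rule sum.reindex[OF inj, unfolded comp_def])
  also have "\<dots> = (\<Sum>i<N. t (p i) *\<^sub>R f i)"
    using inv_into_f_f[OF inj] unfolding u_def by (intro sum.cong refl) auto
  also have "\<dots> = (\<Sum>m<N. t (p (q m)) *\<^sub>R f (q m))"
    by (rule sum.reindex_bij_betw[OF bq, symmetric])
  also have "\<dots> = (\<Sum>m<N. t m *\<^sub>R f (q m))"
    using pq by (intro sum.cong refl) auto
  finally have "(\<Sum>v\<in>?B. u v *\<^sub>R v) = 0" using sum0 by simp
  then have "\<forall>v\<in>?B. u v = 0" using ind dependent_finite[of ?B] by auto
  moreover have "q m < N" if "m < N" for m using bq that by (auto simp: bij_betw_def)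
  ultimately have "u (f (q m)) = 0" if "m < N" for m using that by auto
  then show ?thesis using inv_into_f_f[OF inj] pq bq unfolding u_def
    by (metis bij_betwE lessThan_iff)
qed

lemma abs_prod_one:
  fixes x :: "nat \<Rightarrow> real"
  assumes "\<forall>m<N. \<bar>x m\<bar> = 1"
  shows "\<bar>\<Prod>m<N. x m\<bar> = 1"
  using assms by (simp add: abs_prod)

lemma sign_match:
  fixes F G :: "nat \<Rightarrow> 'a::euclidean_space"
  assumes N3: "3 \<le> N"
    and uF: "\<forall>m<N. F m \<bullet> F m = 1" and uG: "\<forall>m<N. G m \<bullet> G m = 1"
    and zF: "\<forall>m<N. \<forall>m'<N. m' \<noteq> m \<and> m' \<noteq> Suc m mod N \<and> m \<noteq> Suc m' mod N \<longrightarrow> F m \<bullet> F m' = 0"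
    and zG: "\<forall>m<N. \<forall>m'<N. m' \<noteq> m \<and> m' \<noteq> Suc m mod N \<and> m \<noteq> Suc m' mod N \<longrightarrow> G m \<bullet> G m' = 0"
    and bF: "\<forall>m<N. \<bar>F m \<bullet> F (Suc m mod N)\<bar> \<ge> 1/2"
    and bG: "\<forall>m<N. \<bar>G m \<bullet> G (Suc m mod N)\<bar> \<ge> 1/2"
    and iF: "\<And>t. (\<Sum>m<N. t m *\<^sub>R F m) = 0 \<Longrightarrow> \<forall>m<N. t m = 0"
    and iG: "\<And>t. (\<Sum>m<N. t m *\<^sub>R G m) = 0 \<Longrightarrow> \<forall>m<N. t m = 0"
    and ab: "\<forall>m<N. \<forall>m'<N. \<bar>F m \<bullet> F m'\<bar> = \<bar>G m \<bullet> G m'\<bar>"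
  shows "\<exists>\<epsilon>. (\<forall>m<N. \<bar>\<epsilon> m\<bar> = 1) \<and> (\<forall>m<N. \<forall>m'<N. \<epsilon> m * \<epsilon> m' * (F m \<bullet> F m') = G m \<bullet> G m')"
proof -
  define cF where "cF m = F m \<bullet> F (Suc m mod N)" for m
  define cG where "cG m = G m \<bullet> G (Suc m mod N)" for m
  have cFnz: "cF m \<noteq> 0" if "m < N" for m using bF that unfolding cF_def by force
  have cGnz: "cG m \<noteq> 0" if "m < N" for m using bG that unfolding cG_def by force
  have PF: "(\<Prod>m<N. sgn (cF m)) \<noteq> (-1)^N" unfolding cF_def by (rule core[OF N3 uF zF bF iF])
  have PG: "(\<Prod>m<N. sgn (cG m)) \<noteq> (-1)^N" unfolding cG_def by (rule core[OF N3 uG zG bG iG])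
  have AF: "\<bar>\<Prod>m<N. sgn (cF m)\<bar> = 1" using cFnz by (intro abs_prod_one) (simp add: abs_sgn_eq)
  have AG: "\<bar>\<Prod>m<N. sgn (cG m)\<bar> = 1" using cGnz by (intro abs_prod_one) (simp add: abs_sgn_eq)
  have A1: "\<bar>(-1::real)^N\<bar> = 1" by simp
  have PP: "(\<Prod>m<N. sgn (cF m)) = (\<Prod>m<N. sgn (cG m))"
  proof -
    have o: "x = 1 \<or> x = -1" if "\<bar>x\<bar> = (1::real)" for x using that by (cases "x \<ge> 0") auto
    show ?thesis using o[OF AF] o[OF AG] o[OF A1] PF PG by auto
  qed
  define s where "s m = sgn (cF m) * sgn (cG m)" for m
  define \<epsilon> where "\<epsilon> m = (\<Prod>k<m. s k)" for m
  have sabs: "\<bar>s m\<bar> = 1" if "m < N" for m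
    using cFnz cGnz that unfolding s_def by (simp add: abs_mult abs_sgn_eq)
  have eabs: "\<bar>\<epsilon> m\<bar> = 1" if "m \<le> N" for m
    unfolding \<epsilon>_def using sabs that by (intro abs_prod_one) auto
  have eS: "\<epsilon> (Suc m) = \<epsilon> m * s m" for m by (simp add: \<epsilon>_def)
  have eN: "\<epsilon> N = \<epsilon> 0"
  proof -
    have "\<epsilon> N = (\<Prod>m<N. sgn (cF m)) * (\<Prod>m<N. sgn (cG m))"
      unfolding \<epsilon>_def s_def by (rule prod.distrib)
    also have "\<dots> = 1" using PP AG by (metis abs_mult_self_eq mult_1_left)
    finally show ?thesis by (simp add: \<epsilon>_def)
  qed
  have esq: "\<epsilon> m * \<epsilon> m = 1" if "m \<le> N" for m
    using eabs[OF that] by (metis abs_mult_self_eq mult_1_left)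
  have sc: "s m * cF m = cG m" if "m < N" for m
  proof -
    have "\<bar>cF m\<bar> = \<bar>cG m\<bar>" using ab that unfolding cF_def cG_def by simp
    have "s m * cF m = sgn (cG m) * (sgn (cF m) * cF m)" unfolding s_def by (simp add: mult_ac)
    also have "sgn (cF m) * cF m = \<bar>cF m\<bar>" by (simp add: abs_sgn mult.commute)
    finally have "s m * cF m = sgn (cG m) * \<bar>cG m\<bar>" using \<open>\<bar>cF m\<bar> = \<bar>cG m\<bar>\<close> by simp
    also have "\<dots> = cG m" by (simp add: sgn_mult_abs)
    finally show ?thesis .
  qed
  have edge: "\<epsilon> m * \<epsilon> (Suc m mod N) * (F m \<bullet> F (Suc m mod N)) = G m \<bullet> G (Suc m mod N)" if "m < N" for m
  proof -
    have "\<epsilon> (Suc m mod N) = \<epsilon> m * s m" using eN eS[of m] that by (auto simp: suc_mod_cases)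
    then have "\<epsilon> m * \<epsilon> (Suc m mod N) * (F m \<bullet> F (Suc m mod N)) = (\<epsilon> m * \<epsilon> m) * (s m * cF m)"
      unfolding cF_def by (simp add: algebra_simps)
    also have "\<dots> = G m \<bullet> G (Suc m mod N)" using esq[of m] sc[OF that] that unfolding cG_def by simp
    finally show ?thesis .
  qed
  have main: "\<epsilon> m * \<epsilon> m' * (F m \<bullet> F m') = G m \<bullet> G m'" if "m < N" "m' < N" for m m'
  proof -
    consider "m' = m" | "m' = Suc m mod N" | "m = Suc m' mod N"
      | "m' \<noteq> m \<and> m' \<noteq> Suc m mod N \<and> m \<noteq> Suc m' mod N" by blast
    then show ?thesis
    proof cases
      case 1 then show ?thesis using esq[of m] uF uG that by simp
    next
      case 2 then show ?thesis using edge[OF that(1)] by simp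
    next
      case 3
      have "\<epsilon> m' * \<epsilon> m * (F m' \<bullet> F m) = G m' \<bullet> G m" using edge[OF that(2)] 3 by simp
      then show ?thesis by (metis inner_commute mult.commute)
    next
      case 4 then show ?thesis using zF zG that by simp
    qed
  qed
  show ?thesis using eabs main by (intro exI[of _ \<epsilon>]) auto
qed

theorem lemma1:
  fixes f g :: "nat \<Rightarrow> 'a::euclidean_space" and \<Gamma> :: "nat \<Rightarrow> nat \<Rightarrow> nat"
  assumes "cycle_diagram DIM('a) \<Gamma>"
    and "spherical_simplex f" and "allowed_angles f" and "family_diagram f \<Gamma>"
    and "spherical_simplex g" and "allowed_angles g" and "family_diagram g \<Gamma>"
  shows "isometric_families f g"
proof -
  let ?N = "DIM('a)"
  from assms(1) obtain p where N3: "3 \<le> ?N" and bp: "bij_betw p {..<?N} {..<?N}"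
    and adj: "\<forall>i<?N. \<forall>j<?N. \<Gamma> i j > 0 \<longleftrightarrow> (p j = Suc (p i) mod ?N \<or> p i = Suc (p j) mod ?N)"
    unfolding cycle_diagram_def by blast
  have fu: "\<forall>i<?N. norm (f i) = 1" and fi: "inj_on f {..<?N}" and find: "independent (f ` {..<?N})"
    using assms(2) unfolding spherical_simplex_def by auto
  have gu: "\<forall>i<?N. norm (g i) = 1" and gi: "inj_on g {..<?N}" and gind: "independent (g ` {..<?N})"
    using assms(5) unfolding spherical_simplex_def by auto
  have clf: "(\<Gamma> i j = 0 \<and> f i \<bullet> f j = 0) \<or> (\<Gamma> i j = 1 \<and> \<bar>f i \<bullet> f j\<bar> = 1/2) \<or> (\<Gamma> i j = 2 \<and> \<bar>f i \<bullet> f j\<bar> = sqrt 2 / 2)"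
    if ij: "i < ?N" "j < ?N" "i \<noteq> j" for i j
  proof -
    obtain k where "k \<ge> 2" "vec_angle (f i) (f j) = pi / real k \<or> vec_angle (f i) (f j) = pi * (real k - 1) / real k"
      "\<Gamma> i j = k - 2" using assms(4) ij unfolding family_diagram_def by blast
    then show ?thesis using angle_class[of "f i" "f j"] fu assms(3) ij unfolding allowed_angles_def by blast
  qed
  have clg: "(\<Gamma> i j = 0 \<and> g i \<bullet> g j = 0) \<or> (\<Gamma> i j = 1 \<and> \<bar>g i \<bullet> g j\<bar> = 1/2) \<or> (\<Gamma> i j = 2 \<and> \<bar>g i \<bullet> g j\<bar> = sqrt 2 / 2)"
    if ij: "i < ?N" "j < ?N" "i \<noteq> j" for i j
  proof -
    obtain k where "k \<ge> 2" "vec_angle (g i) (g j) = pi / real k \<or> vec_angle (g i) (g j) = pi * (real k - 1) / real k"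
      "\<Gamma> i j = k - 2" using assms(7) ij unfolding family_diagram_def by blast
    then show ?thesis using angle_class[of "g i" "g j"] gu assms(6) ij unfolding allowed_angles_def by blast
  qed
  have fu1: "f i \<bullet> f i = 1" if "i < ?N" for i using fu that by (simp add: norm_eq_1)
  have gu1: "g i \<bullet> g i = 1" if "i < ?N" for i using gu that by (simp add: norm_eq_1)
  have absfg: "\<bar>f i \<bullet> f j\<bar> = \<bar>g i \<bullet> g j\<bar>" if "i < ?N" "j < ?N" for i j
  proof (cases "i = j")
    case True then show ?thesis using fu1 gu1 that by simp
  next
    case False then show ?thesis using clf[OF that False] clg[OF that False] by auto
  qed
  have s2: "1 \<le> sqrt (2::real)" by simp
  have zf: "f i \<bullet> f j = 0" if "i < ?N" "j < ?N" "i \<noteq> j" "\<not> \<Gamma> i j > 0" for i j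
    using clf[OF that(1-3)] that(4) by auto
  have zg: "g i \<bullet> g j = 0" if "i < ?N" "j < ?N" "i \<noteq> j" "\<not> \<Gamma> i j > 0" for i j
    using clg[OF that(1-3)] that(4) by auto
  have bigf: "\<bar>f i \<bullet> f j\<bar> \<ge> 1/2" if "i < ?N" "j < ?N" "i \<noteq> j" "\<Gamma> i j > 0" for i j
    using clf[OF that(1-3)] that(4) s2 by auto
  have bigg: "\<bar>g i \<bullet> g j\<bar> \<ge> 1/2" if "i < ?N" "j < ?N" "i \<noteq> j" "\<Gamma> i j > 0" for i j
    using clg[OF that(1-3)] that(4) s2 by auto
  define q where "q = inv_into {..<?N} p"
  have bq: "bij_betw q {..<?N} {..<?N}" unfolding q_def by (rule bij_betw_inv_into[OF bp])
  have pq: "\<forall>m<?N. p (q m) = m" unfolding q_def using bp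
    by (simp add: bij_betw_inv_into_right)
  have qN: "q m < ?N" if "m < ?N" for m using bq that by (auto simp: bij_betw_def)
  have qne: "q m \<noteq> q m'" if "m < ?N" "m' < ?N" "m \<noteq> m'" for m m' using pq that by metis
  have adjq: "\<Gamma> (q m) (q m') > 0 \<longleftrightarrow> (m' = Suc m mod ?N \<or> m = Suc m' mod ?N)"
    if "m < ?N" "m' < ?N" for m m'
    using adj qN[OF that(1)] qN[OF that(2)] pq that by auto
  define F where "F m = f (q m)" for m
  define G where "G m = g (q m)" for m
  have sucN: "Suc m mod ?N < ?N" "Suc m mod ?N \<noteq> m" if "m < ?N" for m
    using that N3 by (auto simp: suc_mod_cases)
  obtain \<epsilon> where eabs: "\<forall>m<?N. \<bar>\<epsilon> m\<bar> = 1"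
    and emain: "\<forall>m<?N. \<forall>m'<?N. \<epsilon> m * \<epsilon> m' * (F m \<bullet> F m') = G m \<bullet> G m'"
  proof -
    have "\<exists>\<epsilon>. (\<forall>m<?N. \<bar>\<epsilon> m\<bar> = 1) \<and> (\<forall>m<?N. \<forall>m'<?N. \<epsilon> m * \<epsilon> m' * (F m \<bullet> F m') = G m \<bullet> G m')"
    proof (rule sign_match[OF N3])
      show "\<forall>m<?N. F m \<bullet> F m = 1" using fu1 qN unfolding F_def by simp
      show "\<forall>m<?N. G m \<bullet> G m = 1" using gu1 qN unfolding G_def by simp
      show "\<forall>m<?N. \<forall>m'<?N. m' \<noteq> m \<and> m' \<noteq> Suc m mod ?N \<and> m \<noteq> Suc m' mod ?N \<longrightarrow> F m \<bullet> F m' = 0"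
        unfolding F_def using zf qN qne adjq by metis
      show "\<forall>m<?N. \<forall>m'<?N. m' \<noteq> m \<and> m' \<noteq> Suc m mod ?N \<and> m \<noteq> Suc m' mod ?N \<longrightarrow> G m \<bullet> G m' = 0"
        unfolding G_def using zg qN qne adjq by metis
      show "\<forall>m<?N. \<bar>F m \<bullet> F (Suc m mod ?N)\<bar> \<ge> 1/2"
        unfolding F_def using bigf qN qne adjq sucN by metis
      show "\<forall>m<?N. \<bar>G m \<bullet> G (Suc m mod ?N)\<bar> \<ge> 1/2"
        unfolding G_def using bigg qN qne adjq sucN by metis
      show "\<And>t. (\<Sum>m<?N. t m *\<^sub>R F m) = 0 \<Longrightarrow> \<forall>m<?N. t m = 0"
        unfolding F_def by (rule indep_reindex[OF find fi bq pq])
      show "\<And>t. (\<Sum>m<?N. t m *\<^sub>R G m) = 0 \<Longrightarrow> \<forall>m<?N. t m = 0"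
        unfolding G_def by (rule indep_reindex[OF gind gi bq pq])
      show "\<forall>m<?N. \<forall>m'<?N. \<bar>F m \<bullet> F m'\<bar> = \<bar>G m \<bullet> G m'\<bar>"
        unfolding F_def G_def using absfg qN by simp
    qed
    then show ?thesis using that by blast
  qed
  define e where "e i = \<epsilon> (p i)" for i
  have pN: "p i < ?N" if "i < ?N" for i using bp that by (auto simp: bij_betw_def)
  have qp: "q (p i) = i" if "i < ?N" for i unfolding q_def using bp that
    by (simp add: bij_betw_inv_into_left)
  have esq: "e i * e i = 1" if "i < ?N" for i
    using eabs pN[OF that] unfolding e_def by (metis abs_mult_self_eq mult_1_left)
  have gram: "\<forall>i<?N. \<forall>j<?N. (e i *\<^sub>R g i) \<bullet> (e j *\<^sub>R g j) = f i \<bullet> f j"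
  proof (intro allI impI)
    fix i j assume ij: "i < ?N" "j < ?N"
    have "e i * e j * (f i \<bullet> f j) = g i \<bullet> g j"
      using emain pN[OF ij(1)] pN[OF ij(2)] qp[OF ij(1)] qp[OF ij(2)] unfolding e_def F_def G_def by metis
    then have "(e i *\<^sub>R g i) \<bullet> (e j *\<^sub>R g j) = (e i * e i) * (e j * e j) * (f i \<bullet> f j)"
      by (simp add: algebra_simps)
    then show "(e i *\<^sub>R g i) \<bullet> (e j *\<^sub>R g j) = f i \<bullet> f j" using esq ij by simp
  qed
  obtain Q where oQ: "orthogonal_transformation Q" and Qf: "\<forall>i<?N. Q (f i) = e i *\<^sub>R g i"
    using ortho_ext[OF find fi gram] by blast
  have linQ: "linear Q" using oQ unfolding orthogonal_transformation_def by simp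
  have epm: "e i = 1 \<or> e i = -1" if "i < ?N" for i
    using esq[OF that] by (metis mult_cancel_left1 square_eq_1_iff)
  have "Q ` family_vectors f = family_vectors g"
  proof
    show "Q ` family_vectors f \<subseteq> family_vectors g"
    proof
      fix w assume "w \<in> Q ` family_vectors f"
      then obtain i v where i: "i < ?N" and v: "v = f i \<or> v = - f i" and w: "w = Q v"
        unfolding family_vectors_def by blast
      have "w = e i *\<^sub>R g i \<or> w = - (e i *\<^sub>R g i)"
        using v w Qf i linear_neg[OF linQ] by auto
      then show "w \<in> family_vectors g" using epm[OF i] i unfolding family_vectors_def by auto
    qed
    show "family_vectors g \<subseteq> Q ` family_vectors f"
    proof
      fix w assume "w \<in> family_vectors g"
      then obtain i where i: "i < ?N" and v: "w = g i \<or> w = - g i"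
        unfolding family_vectors_def by blast
      have fv: "f i \<in> family_vectors f" "- f i \<in> family_vectors f"
        using i unfolding family_vectors_def by auto
      have Qm: "Q (- f i) = - (e i *\<^sub>R g i)" using Qf i linear_neg[OF linQ] by simp
      have Qfi: "Q (f i) = e i *\<^sub>R g i" using Qf i by simp
      consider (a) "e i = 1" | (b) "e i = -1" using epm i by blast
      then show "w \<in> Q ` family_vectors f"
      proof cases
        case a
        then have "Q (f i) = g i" "Q (- f i) = - g i" using Qfi Qm by simp_all
        then show ?thesis using v fv by (metis image_eqI)
      next
        case b
        then have "Q (f i) = - g i" "Q (- f i) = g i" using Qfi Qm by simp_all
        then show ?thesis using v fv by (metis image_eqI)
      qed
    qed
  qed
  then show ?thesis unfolding isometric_families_def using oQ by blast
qed

end
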